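(* Let $\mathcal{K}$ be a finite simplicial complex with simplices $\sigma_1,\ldots,\sigma_N$, indexed so that $i<j$ whenever $\sigma_i$ is a proper face of $\sigma_j$. Let $B$ be a triangulated surface and let $f:\mathcal{K}\times B\to\mathbb{R}$ be a piecewise-linear fibered filtration function, with induced simplex indexing $\text{idx}_f$. Let $(v,w)$ be a line segment in $B$ (with endpoints $v,w$) that is not on the boundary of $B$, and let $(\sigma_i,\sigma_j)$ be a pair of distinct simplices of $\mathcal{K}$. 1. If $v$ and $w$ are not the two endpoints of an edge of $B$, let $\Delta$ be the unique triangle of $B$ containing $(v,w)$. Then $(\sigma_i,\sigma_j)$ swaps along $(v,w)$ if and only if $(v,w)$ is detected in $\Delta$ for the pair $(\sigma_i,\sigma_j)$. 2. If $v$ and $w$ are the two endpoints of an edge $e$ of $B$, let $\Delta_1,\Delta_2$ be the two triangles of $B$ adjacent to $e$. Then $(\sigma_i,\sigma_j)$ swaps along $(v,w)$ if and only if $(v,w)$ is detected for the pair $(\sigma_i,\sigma_j)$ in exactly one of $\Delta_1,\Delta_2$.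
   Context: A filtration function on a simplicial complex $\mathcal{K}$ is a function $g:\mathcal{K}\to\mathbb{R}$ with $g(\tau)\le g(\sigma)$ whenever $\tau$ is a face of $\sigma$. A piecewise-linear fibered filtration function with base $B$ (a simplicial complex) is a function $f:\mathcal{K}\times B\to\mathbb{R}$ such that $f(\cdot,p)$ is a filtration function for each $p\in B$ and $f(\sigma,\cdot)$ is linear (affine) on each simplex of $B$ for each $\sigma\in\mathcal{K}$. The induced simplex indexing $\text{idx}_f:\mathcal{K}\times B\to\{1,\ldots,N\}$ is the unique function, bijective in the first argument for each $p$, such that $\text{idx}_f(\sigma_a,p)<\text{idx}_f(\sigma_b,p)$ if either $f(\sigma_a,p)<f(\sigma_b,p)$, or $f(\sigma_a,p)=f(\sigma_b,p)$ and $a<b$. Write $I(\sigma,\tau)=\{p\in B: f(\sigma,p)=f(\tau,p)\}$. Two simplices $\sigma,\tau$ have different relative orders at points $p_1,p_2$ if $(\text{idx}_f(\sigma,p_1)-\text{idx}_f(\tau,p_1))(\text{idx}_f(\sigma,p_2)-\text{idx}_f(\tau,p_2))<0$. Swapping: if $I(\sigma_i,\sigma_j)\cap\Delta$ is a line segment $\ell$ cutting a triangle $\Delta$ into two polygons $Q_1,Q_2$, then $(\sigma_i,\sigma_j)$ swaps along $\ell$ if $\sigma_i,\sigma_j$ have different relative orders at every $p_1\in Q_1$, $p_2\in Q_2$. If $e$ is an edge of $B$ with $e\subseteq I(\sigma_i,\sigma_j)$ and adjacent triangles $\Delta_1,\Delta_2$, then $(\sigma_i,\sigma_j)$ swaps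 along $e$ if $\sigma_i,\sigma_j$ have different relative orders at every $p_1\in\Delta_1\setminus e$, $p_2\in\Delta_2\setminus e$. Detection: for an edge $e$ of $B$ with endpoints $a,b$, a point $v\in e$ is detected along $e$ for the pair $(\sigma,\tau)$ if $\sigma,\tau$ have different relative orders at $a$ and $b$ and $v$ is the (unique) point of $e$ at which the relative order of $\sigma$ and $\tau$ changes, i.e. where $f(\sigma,v)=f(\tau,v)$. A line segment $(v,w)$ is detected in a triangle $\Delta$ for the pair $(\sigma,\tau)$ if $v$ is detected along some edge $e_1$ of $\Delta$ for $(\sigma,\tau)$ and $w$ is detected along some edge $e_2$ of $\Delta$ for $(\sigma,\tau)$. *)

theory Defs
  imports "HOL-Analysis.Analysis"
begin

text \<open>Simplices sigma_1, ..., sigma_N are given by sig 1, ..., sig N (finite nonempty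
  vertex sets).\<close>

definition indexed_simplicial_complex :: "(nat \<Rightarrow> 'v set) \<Rightarrow> nat \<Rightarrow> bool" where
  "indexed_simplicial_complex sig N \<longleftrightarrow>
     (\<forall>k\<in>{1..N}. finite (sig k) \<and> sig k \<noteq> {}) \<and>
     inj_on sig {1..N} \<and>
     (\<forall>k\<in>{1..N}. \<forall>\<tau>. \<tau> \<subseteq> sig k \<and> \<tau> \<noteq> {} \<longrightarrow> \<tau> \<in> sig ` {1..N}) \<and>
     (\<forall>k\<in>{1..N}. \<forall>l\<in>{1..N}. sig k \<subset> sig l \<longrightarrow> k < l)"

definition is_triangle :: "'a::euclidean_space set \<Rightarrow> bool" where
  "is_triangle \<Delta> \<longleftrightarrow> (\<exists>a b c. \<not> collinear {a, b, c} \<and> \<Delta> = convex hull {a, b, c})"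

definition tri_verts :: "'a::euclidean_space set \<Rightarrow> 'a set" where
  "tri_verts \<Delta> = {x. x extreme_point_of \<Delta>}"

definition tri_edges :: "'a::euclidean_space set \<Rightarrow> 'a set set" where
  "tri_edges \<Delta> = {closed_segment a b | a b. a \<in> tri_verts \<Delta> \<and> b \<in> tri_verts \<Delta> \<and> a \<noteq> b}"

definition B_edges :: "'a::euclidean_space set set \<Rightarrow> 'a set set" where
  "B_edges T = \<Union> (tri_edges ` T)"

definition surface_boundary :: "'a::euclidean_space set set \<Rightarrow> 'a set" where
  "surface_boundary T = \<Union> {e \<in> B_edges T. card {\<Delta> \<in> T. e \<in> tri_edges \<Delta>} = 1}"

definition is_surface :: "'a::euclidean_space set \<Rightarrow> bool" where
  "is_surface S \<longleftrightarrow>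
     (\<forall>x\<in>S. \<exists>U V. openin (top_of_set S) U \<and> x \<in> U \<and>
        openin (top_of_set {z :: real \<times> real. snd z \<ge> 0}) V \<and> U homeomorphic V)"

definition triangulated_surface :: "'a::euclidean_space set set \<Rightarrow> bool" where
  "triangulated_surface T \<longleftrightarrow>
     finite T \<and> T \<noteq> {} \<and> (\<forall>\<Delta>\<in>T. is_triangle \<Delta>) \<and>
     (\<forall>\<Delta>1\<in>T. \<forall>\<Delta>2\<in>T. \<Delta>1 = \<Delta>2 \<or> \<Delta>1 \<inter> \<Delta>2 = {} \<or>
        (\<exists>x. x \<in> tri_verts \<Delta>1 \<and> x \<in> tri_verts \<Delta>2 \<and> \<Delta>1 \<inter> \<Delta>2 = {x}) \<or>
        (\<exists>e. e \<in> tri_edges \<Delta>1 \<and> e \<in> tri_edges \<Delta>2 \<and> \<Delta>1 \<inter> \<Delta>2 = e)) \<and>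
     is_surface (\<Union> T)"

definition pl_fibered_filtration ::
  "(nat \<Rightarrow> 'v set) \<Rightarrow> nat \<Rightarrow> 'a::euclidean_space set set \<Rightarrow> ('v set \<Rightarrow> 'a \<Rightarrow> real) \<Rightarrow> bool" where
  "pl_fibered_filtration sig N T f \<longleftrightarrow>
     (\<forall>p\<in>\<Union>T. \<forall>k\<in>{1..N}. \<forall>l\<in>{1..N}. sig k \<subseteq> sig l \<longrightarrow> f (sig k) p \<le> f (sig l) p) \<and>
     (\<forall>k\<in>{1..N}. \<forall>\<Delta>\<in>T. \<exists>L c. linear L \<and> (\<forall>p\<in>\<Delta>. f (sig k) p = L p + c))"

text \<open>Induced simplex indexing: idx_f(sigma_a, p) is the position of a in the strict total
  order "(f(sigma_b,p), b) lexicographically less than (f(sigma_a,p), a)" on {1..N}; this is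
  the unique function bijective in the first argument with the defining property.\<close>
definition idx :: "(nat \<Rightarrow> 'v set) \<Rightarrow> nat \<Rightarrow> ('v set \<Rightarrow> 'a \<Rightarrow> real) \<Rightarrow> nat \<Rightarrow> 'a \<Rightarrow> nat" where
  "idx sig N f a p =
     card {b \<in> {1..N}. f (sig b) p < f (sig a) p \<or> (f (sig b) p = f (sig a) p \<and> b < a)} + 1"

definition diff_order ::
  "(nat \<Rightarrow> 'v set) \<Rightarrow> nat \<Rightarrow> ('v set \<Rightarrow> 'a \<Rightarrow> real) \<Rightarrow> nat \<Rightarrow> nat \<Rightarrow> 'a \<Rightarrow> 'a \<Rightarrow> bool" where
  "diff_order sig N f a b p1 p2 \<longleftrightarrow>
     (int (idx sig N f a p1) - int (idx sig N f b p1)) *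
     (int (idx sig N f a p2) - int (idx sig N f b p2)) < 0"

definition eq_set :: "(nat \<Rightarrow> 'v set) \<Rightarrow> ('v set \<Rightarrow> 'a \<Rightarrow> real) \<Rightarrow> nat \<Rightarrow> nat \<Rightarrow> 'a set" where
  "eq_set sig f a b = {p. f (sig a) p = f (sig b) p}"

definition swaps_in_triangle ::
  "(nat \<Rightarrow> 'v set) \<Rightarrow> nat \<Rightarrow> ('v set \<Rightarrow> 'a::euclidean_space \<Rightarrow> real) \<Rightarrow> nat \<Rightarrow> nat \<Rightarrow> 'a set \<Rightarrow> 'a set \<Rightarrow> bool" where
  "swaps_in_triangle sig N f i j \<Delta> l \<longleftrightarrow>
     eq_set sig f i j \<inter> \<Delta> = l \<and>
     (\<exists>Q1 Q2. Q1 \<noteq> Q2 \<and> components (\<Delta> - l) = {Q1, Q2} \<and>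
        (\<forall>p1\<in>Q1. \<forall>p2\<in>Q2. diff_order sig N f i j p1 p2))"

definition swaps_along_edge ::
  "(nat \<Rightarrow> 'v set) \<Rightarrow> nat \<Rightarrow> ('v set \<Rightarrow> 'a::euclidean_space \<Rightarrow> real) \<Rightarrow> nat \<Rightarrow> nat \<Rightarrow> 'a set \<Rightarrow> 'a set \<Rightarrow> 'a set \<Rightarrow> bool" where
  "swaps_along_edge sig N f i j e \<Delta>1 \<Delta>2 \<longleftrightarrow>
     e \<subseteq> eq_set sig f i j \<and>
     (\<forall>p1\<in>\<Delta>1 - e. \<forall>p2\<in>\<Delta>2 - e. diff_order sig N f i j p1 p2)"

definition detected_along ::
  "(nat \<Rightarrow> 'v set) \<Rightarrow> nat \<Rightarrow> ('v set \<Rightarrow> 'a::euclidean_space \<Rightarrow> real) \<Rightarrow> nat \<Rightarrow> nat \<Rightarrow> 'a \<Rightarrow> 'a \<Rightarrow> 'a \<Rightarrow> bool" where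
  "detected_along sig N f i j a b v \<longleftrightarrow>
     diff_order sig N f i j a b \<and> v \<in> closed_segment a b \<and> f (sig i) v = f (sig j) v"

definition segment_detected_in ::
  "(nat \<Rightarrow> 'v set) \<Rightarrow> nat \<Rightarrow> ('v set \<Rightarrow> 'a::euclidean_space \<Rightarrow> real) \<Rightarrow> nat \<Rightarrow> nat \<Rightarrow> 'a set \<Rightarrow> 'a \<Rightarrow> 'a \<Rightarrow> bool" where
  "segment_detected_in sig N f i j \<Delta> v w \<longleftrightarrow>
     (\<exists>a b. a \<in> tri_verts \<Delta> \<and> b \<in> tri_verts \<Delta> \<and> a \<noteq> b \<and> detected_along sig N f i j a b v) \<and>
     (\<exists>a b. a \<in> tri_verts \<Delta> \<and> b \<in> tri_verts \<Delta> \<and> a \<noteq> b \<and> detected_along sig N f i j a b w)"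

end

theory Submission
  imports Defs
begin



lemma idx_lt:
  assumes "i \<in> {1..N}" "j \<in> {1..N}" "i \<noteq> j"
  shows "idx sig N f j p < idx sig N f i p \<longleftrightarrow>
     (f (sig j) p < f (sig i) p \<or> (f (sig j) p = f (sig i) p \<and> j < i))"
proof -
  define R where "R = (\<lambda>b a. f (sig b) p < f (sig a) p \<or> (f (sig b) p = f (sig a) p \<and> b < a))"
  have idxR: "idx sig N f a p = card {b\<in>{1..N}. R b a} + 1" for a
    by (simp add: idx_def R_def)
  have mono: "card {b\<in>{1..N}. R b x} < card {b\<in>{1..N}. R b y}" if "R x y" "x \<in> {1..N}" for x y
  proof (rule psubset_card_mono)
    show "finite {b\<in>{1..N}. R b y}" by simp
    show "{b\<in>{1..N}. R b x} \<subset> {b\<in>{1..N}. R b y}"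
    proof
      show "{b\<in>{1..N}. R b x} \<subseteq> {b\<in>{1..N}. R b y}"
        using that unfolding R_def by auto
      show "{b\<in>{1..N}. R b x} \<noteq> {b\<in>{1..N}. R b y}"
        using that unfolding R_def by auto
    qed
  qed
  have tot: "R j i \<or> R i j" using assms unfolding R_def by auto
  have "idx sig N f j p < idx sig N f i p \<longleftrightarrow> R j i"
  proof
    assume "idx sig N f j p < idx sig N f i p"
    then show "R j i" using tot mono[of i j] assms idxR by fastforce
  next
    assume "R j i" then show "idx sig N f j p < idx sig N f i p"
      using mono[of j i] assms idxR by simp
  qed
  then show ?thesis unfolding R_def .
qed

lemma diff_order_iff:
  assumes "i \<in> {1..N}" "j \<in> {1..N}" "i \<noteq> j"
  shows "diff_order sig N f i j p q \<longleftrightarrow>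
    ((f (sig j) p < f (sig i) p \<or> (f (sig j) p = f (sig i) p \<and> j < i)) \<noteq>
     (f (sig j) q < f (sig i) q \<or> (f (sig j) q = f (sig i) q \<and> j < i)))"
proof -
  have ne: "idx sig N f i x \<noteq> idx sig N f j x" for x
  proof
    assume e: "idx sig N f i x = idx sig N f j x"
    have "\<not> (f (sig j) x < f (sig i) x \<or> (f (sig j) x = f (sig i) x \<and> j < i))"
      using idx_lt[OF assms, of sig f x] e by simp
    moreover have "\<not> (f (sig i) x < f (sig j) x \<or> (f (sig i) x = f (sig j) x \<and> i < j))"
      using idx_lt[OF assms(2,1) assms(3)[symmetric], of sig f x] e by simp
    ultimately show False using assms(3) by linarith
  qed
  show ?thesis
    unfolding diff_order_def idx_lt[OF assms, symmetric]
    using ne[of p] ne[of q]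
    by (cases "idx sig N f j p < idx sig N f i p"; cases "idx sig N f j q < idx sig N f i q")
       (auto simp: mult_less_0_iff)
qed




definition sgn_ord :: "bool \<Rightarrow> real \<Rightarrow> bool" where
  "sgn_ord bb t \<longleftrightarrow> 0 < t \<or> (t = 0 \<and> bb)"

lemma aff3:
  fixes L :: "'a::real_vector \<Rightarrow> real"
  assumes L: "linear L" and "u + v + w = 1"
  shows "L (u *\<^sub>R a + v *\<^sub>R b + w *\<^sub>R c) + k = u * (L a + k) + v * (L b + k) + w * (L c + k)"
proof -
  have "k = (u + v + w) * k" using assms(2) by simp
  then show ?thesis
    by (simp add: linear_add[OF L] linear_scale[OF L] algebra_simps)
qed

lemma aff2:
  fixes L :: "'a::real_vector \<Rightarrow> real"
  assumes L: "linear L"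
  shows "L ((1 - t) *\<^sub>R x + t *\<^sub>R y) + k = (1 - t) * (L x + k) + t * (L y + k)"
  by (simp only: linear_add[OF L] linear_scale[OF L]) (simp add: algebra_simps)

lemma seg_aff:
  fixes L :: "'a::real_vector \<Rightarrow> real"
  assumes L: "linear L" and "p \<in> closed_segment x y"
  shows "\<exists>t. 0 \<le> t \<and> t \<le> 1 \<and> p = (1 - t) *\<^sub>R x + t *\<^sub>R y \<and> L p + k = (1 - t) * (L x + k) + t * (L y + k)"
  using assms(2) aff2[OF L] unfolding closed_segment_def by blast

lemma zero_on_seg:
  fixes L :: "'a::real_vector \<Rightarrow> real"
  assumes L: "linear L" and "p \<in> closed_segment x y" "L x + k = 0" "L y + k = 0"
  shows "L p + k = 0"
  using seg_aff[OF L assms(2), of k] assms(3,4) by auto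

lemma two_zeros:
  fixes L :: "'a::real_vector \<Rightarrow> real"
  assumes L: "linear L" and v: "v \<in> closed_segment x y" and w: "w \<in> closed_segment x y"
    and "v \<noteq> w" "L v + k = 0" "L w + k = 0"
  shows "L x + k = 0 \<and> L y + k = 0"
proof -
  obtain s where s: "v = (1 - s) *\<^sub>R x + s *\<^sub>R y" "L v + k = (1 - s) * (L x + k) + s * (L y + k)"
    using seg_aff[OF L v, of k] by blast
  obtain t where t: "w = (1 - t) *\<^sub>R x + t *\<^sub>R y" "L w + k = (1 - t) * (L x + k) + t * (L y + k)"
    using seg_aff[OF L w, of k] by blast
  have "s \<noteq> t" using s t assms(4) by auto
  have "(t - s) * ((L x + k) - (L y + k)) = 0" using s t assms(5,6) by (simp add: algebra_simps)
  then have "L x + k = L y + k" using \<open>s \<noteq> t\<close> by simp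
  then show ?thesis using s assms(5) by (simp add: algebra_simps)
qed

lemma tri_verts_eq:
  fixes a b c :: "'a::euclidean_space"
  assumes "\<not> collinear {a,b,c}"
  shows "tri_verts (convex hull {a,b,c}) = {a,b,c}"
proof -
  have "\<not> affine_dependent {a,b,c}" using assms collinear_3_eq_affine_dependent by blast
  then show ?thesis unfolding tri_verts_def
    using extreme_point_of_convex_hull_affine_independent by blast
qed

lemma nc_distinct:
  assumes "\<not> collinear {a,b,c}"
  shows "a \<noteq> b" "a \<noteq> c" "b \<noteq> c"
  using assms collinear_3_eq_affine_dependent by blast+

lemma not_in_seg:
  fixes v w c :: "'a::euclidean_space"
  assumes "\<not> collinear {v,w,c}"
  shows "c \<notin> closed_segment v w"
proof
  assume "c \<in> closed_segment v w"
  then have "{v,w,c} \<subseteq> closed_segment v w" by auto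
  then show False using assms collinear_subset collinear_closed_segment by blast
qed

lemma side_sign:
  fixes L :: "'a::euclidean_space \<Rightarrow> real"
  assumes nc: "\<not> collinear {v,w,c}" and L: "linear L"
    and gD: "\<forall>p\<in>convex hull {v,w,c}. g p = L p + k"
    and z: "g v = 0" "g w = 0"
    and p: "p \<in> convex hull {v,w,c}" "p \<notin> closed_segment v w"
  shows "sgn_ord bb (g p) = sgn_ord bb (g c)"
proof -
  obtain a1 a2 a3 where a: "0 \<le> a1" "0 \<le> a2" "0 \<le> a3" "a1 + a2 + a3 = 1"
    "p = a1 *\<^sub>R v + a2 *\<^sub>R w + a3 *\<^sub>R c"
    using p(1) unfolding convex_hull_3 by blast
  have hv: "v \<in> convex hull {v,w,c}" "w \<in> convex hull {v,w,c}" "c \<in> convex hull {v,w,c}"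
    by (auto intro: hull_inc)
  have gp: "g p = a3 * g c"
    using aff3[OF L a(4), of v w c k] gD p(1) hv z a(5) by simp
  have "a3 \<noteq> 0"
  proof
    assume "a3 = 0"
    then have "a1 = 1 - a2" using a by simp
    then have "p = (1 - a2) *\<^sub>R v + a2 *\<^sub>R w" using a \<open>a3 = 0\<close> by simp
    moreover have "a2 \<le> 1" using a by simp
    ultimately have "p \<in> closed_segment v w" unfolding closed_segment_def using a(2) by blast
    then show False using p(2) by blast
  qed
  then have "a3 > 0" using a by simp
  then show ?thesis unfolding sgn_ord_def gp
    by (auto simp: zero_less_mult_iff)
qed

lemma tri_detect:
  fixes L :: "'a::euclidean_space \<Rightarrow> real"
  assumes nc: "\<not> collinear {v,w,c}" and L: "linear L"
    and gD: "\<forall>p\<in>convex hull {v,w,c}. g p = L p + k"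
  shows "((\<exists>x y. x\<in>{v,w,c} \<and> y\<in>{v,w,c} \<and> x\<noteq>y \<and> sgn_ord bb (g x) \<noteq> sgn_ord bb (g y) \<and> v \<in> closed_segment x y \<and> g v = 0) \<and>
         (\<exists>x y. x\<in>{v,w,c} \<and> y\<in>{v,w,c} \<and> x\<noteq>y \<and> sgn_ord bb (g x) \<noteq> sgn_ord bb (g y) \<and> w \<in> closed_segment x y \<and> g w = 0))
     \<longleftrightarrow> (g v = 0 \<and> g w = 0 \<and> sgn_ord bb (g c) \<noteq> bb)"
proof -
  have d: "v \<noteq> w" "v \<noteq> c" "w \<noteq> c" using nc_distinct[OF nc] by auto
  show ?thesis
  proof
    assume A: "(\<exists>x y. x\<in>{v,w,c} \<and> y\<in>{v,w,c} \<and> x\<noteq>y \<and> sgn_ord bb (g x) \<noteq> sgn_ord bb (g y) \<and> v \<in> closed_segment x y \<and> g v = 0) \<and>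
         (\<exists>x y. x\<in>{v,w,c} \<and> y\<in>{v,w,c} \<and> x\<noteq>y \<and> sgn_ord bb (g x) \<noteq> sgn_ord bb (g y) \<and> w \<in> closed_segment x y \<and> g w = 0)"
    then have z: "g v = 0" "g w = 0" by auto
    then have sv: "sgn_ord bb (g v) = bb" "sgn_ord bb (g w) = bb" by (auto simp: sgn_ord_def)
    from A obtain x y where "x\<in>{v,w,c}" "y\<in>{v,w,c}" "sgn_ord bb (g x) \<noteq> sgn_ord bb (g y)" by blast
    then have "sgn_ord bb (g c) \<noteq> bb" using sv by auto
    then show "g v = 0 \<and> g w = 0 \<and> sgn_ord bb (g c) \<noteq> bb" using z by blast
  next
    assume B: "g v = 0 \<and> g w = 0 \<and> sgn_ord bb (g c) \<noteq> bb"
    then have sv: "sgn_ord bb (g v) = bb" "sgn_ord bb (g w) = bb" by (auto simp: sgn_ord_def)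
    show "(\<exists>x y. x\<in>{v,w,c} \<and> y\<in>{v,w,c} \<and> x\<noteq>y \<and> sgn_ord bb (g x) \<noteq> sgn_ord bb (g y) \<and> v \<in> closed_segment x y \<and> g v = 0) \<and>
         (\<exists>x y. x\<in>{v,w,c} \<and> y\<in>{v,w,c} \<and> x\<noteq>y \<and> sgn_ord bb (g x) \<noteq> sgn_ord bb (g y) \<and> w \<in> closed_segment x y \<and> g w = 0)"
    proof
      show "\<exists>x y. x\<in>{v,w,c} \<and> y\<in>{v,w,c} \<and> x\<noteq>y \<and> sgn_ord bb (g x) \<noteq> sgn_ord bb (g y) \<and> v \<in> closed_segment x y \<and> g v = 0"
        by (rule exI[of _ v], rule exI[of _ c]) (use B sv d in auto)
      show "\<exists>x y. x\<in>{v,w,c} \<and> y\<in>{v,w,c} \<and> x\<noteq>y \<and> sgn_ord bb (g x) \<noteq> sgn_ord bb (g y) \<and> w \<in> closed_segment x y \<and> g w = 0"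
        by (rule exI[of _ w], rule exI[of _ c]) (use B sv d in auto)
    qed
  qed
qed




lemma comp_eq:
  assumes "x \<in> P" "P = S \<inter> U" "S \<subseteq> U \<union> W" "U \<inter> W \<inter> S = {}" "connected P" "open U" "open W"
  shows "connected_component_set S x = P"
proof
  show "P \<subseteq> connected_component_set S x"
    using assms by (intro connected_component_maximal) auto
  let ?C = "connected_component_set S x"
  have "?C \<subseteq> S" by (rule connected_component_subset)
  have "U \<inter> ?C = {} \<or> W \<inter> ?C = {}"
    using connectedD[OF connected_connected_component assms(6,7)] assms(3,4) \<open>?C \<subseteq> S\<close> by blast
  moreover have "x \<in> U \<inter> ?C" using assms(1,2) by auto
  ultimately have "W \<inter> ?C = {}" by blast
  then show "?C \<subseteq> P" using assms(2,3) \<open>?C \<subseteq> S\<close> by blast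
qed

lemma comps2:
  assumes "S = P \<union> M" "P \<inter> M = {}" "P \<noteq> {}" "M \<noteq> {}" "connected P" "connected M"
    "P = S \<inter> U" "M = S \<inter> W" "open U" "open W"
  shows "components S = {P, M}"
proof -
  have cov: "S \<subseteq> U \<union> W" and dis: "U \<inter> W \<inter> S = {}" using assms by auto
  have cP: "connected_component_set S x = P" if "x \<in> P" for x
    using comp_eq[OF that assms(7) cov dis assms(5,9,10)] .
  have cM: "connected_component_set S x = M" if "x \<in> M" for x
    using comp_eq[OF that assms(8), of U] cov dis assms(6,9,10) by blast
  show ?thesis
  proof
    show "components S \<subseteq> {P, M}"
      unfolding components_def using assms(1) cP cM by blast
    obtain p q where "p \<in> P" "q \<in> M" using assms(3,4) by blast
    then show "{P, M} \<subseteq> components S"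
      using componentsI[of p S] componentsI[of q S] cP cM assms(1) by auto
  qed
qed

lemma G_cont:
  fixes L :: "'a::euclidean_space \<Rightarrow> real"
  assumes L: "linear L" and G: "\<And>p. G p = L p + k"
  shows "continuous_on UNIV G"
proof -
  have "G = (\<lambda>p. L p + k)" using G by auto
  moreover have "continuous_on UNIV L"
    using L linear_conv_bounded_linear linear_continuous_on by blast
  ultimately show ?thesis by (auto intro!: continuous_intros)
qed

lemma G_open:
  fixes L :: "'a::euclidean_space \<Rightarrow> real"
  assumes L: "linear L" and G: "\<And>p. G p = L p + k"
  shows "open {p. 0 < G p}" "open {p. G p < 0}"
  using open_Collect_less[OF continuous_on_const G_cont[OF L G]]
        open_Collect_less[OF G_cont[OF L G] continuous_on_const] by auto

lemma G_convex:
  fixes L :: "'a::euclidean_space \<Rightarrow> real"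
  assumes L: "linear L" and G: "\<And>p. G p = L p + k"
  shows "convex {p. 0 < G p}" "convex {p. G p < 0}"
proof -
  have e: "G ((1 - u) *\<^sub>R x + u *\<^sub>R y) = (1 - u) * G x + u * G y" for u x y
    using aff2[OF L, of u x y k] G by simp
  show "convex {p. 0 < G p}" unfolding convex_alt
  proof (intro ballI allI impI)
    fix x y u assume a: "x \<in> {p. 0 < G p}" "y \<in> {p. 0 < G p}" "0 \<le> (u::real) \<and> u \<le> 1"
    have "(1 - u) * G x \<ge> 0" "u * G y \<ge> 0" using a by auto
    moreover have "(1 - u) * G x > 0 \<or> u * G y > 0" using a
      by (cases "u = 1") auto
    ultimately show "(1 - u) *\<^sub>R x + u *\<^sub>R y \<in> {p. 0 < G p}"
      unfolding e mem_Collect_eq by linarith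
  qed
  show "convex {p. G p < 0}" unfolding convex_alt
  proof (intro ballI allI impI)
    fix x y u assume a: "x \<in> {p. G p < 0}" "y \<in> {p. G p < 0}" "0 \<le> (u::real) \<and> u \<le> 1"
    have "(1 - u) * G x \<le> 0" "u * G y \<le> 0" using a by (auto simp: mult_nonneg_nonpos)
    moreover have "(1 - u) * G x < 0 \<or> u * G y < 0" using a
      by (cases "u = 1") (auto simp: mult_pos_neg)
    ultimately show "(1 - u) *\<^sub>R x + u *\<^sub>R y \<in> {p. G p < 0}"
      unfolding e mem_Collect_eq by linarith
  qed
qed




definition DETV :: "'a::real_vector set \<Rightarrow> ('a \<Rightarrow> real) \<Rightarrow> bool \<Rightarrow> 'a \<Rightarrow> bool" where
  "DETV V g bb u \<longleftrightarrow> (\<exists>x y. x \<in> V \<and> y \<in> V \<and> x \<noteq> y \<and> sgn_ord bb (g x) \<noteq> sgn_ord bb (g y)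
      \<and> u \<in> closed_segment x y \<and> g u = 0)"

lemma hull_sign:
  fixes L :: "'a::euclidean_space \<Rightarrow> real"
  assumes L: "linear L" and G: "\<And>p. G p = L p + k" and p: "p \<in> convex hull {a,b,c}"
  shows "G a \<ge> 0 \<Longrightarrow> G b \<ge> 0 \<Longrightarrow> G c \<ge> 0 \<Longrightarrow> G p \<ge> 0"
    and "G a \<le> 0 \<Longrightarrow> G b \<le> 0 \<Longrightarrow> G c \<le> 0 \<Longrightarrow> G p \<le> 0"
proof -
  obtain a1 a2 a3 where a: "0 \<le> a1" "0 \<le> a2" "0 \<le> a3" "a1 + a2 + a3 = 1"
    "p = a1 *\<^sub>R a + a2 *\<^sub>R b + a3 *\<^sub>R c"
    using p unfolding convex_hull_3 by blast
  have e: "G p = a1 * G a + a2 * G b + a3 * G c"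
    using aff3[OF L a(4), of a b c k] G a(5) by simp
  show "G a \<ge> 0 \<Longrightarrow> G b \<ge> 0 \<Longrightarrow> G c \<ge> 0 \<Longrightarrow> G p \<ge> 0"
    unfolding e using a by simp
  show "G a \<le> 0 \<Longrightarrow> G b \<le> 0 \<Longrightarrow> G c \<le> 0 \<Longrightarrow> G p \<le> 0"
    unfolding e using a by (simp add: add_nonpos_nonpos mult_nonneg_nonpos)
qed

lemma det_vert:
  fixes L :: "'a::euclidean_space \<Rightarrow> real"
  assumes L: "linear L" and G: "\<And>p. G p = L p + k" and d: "DETV V G bb u"
  shows "(\<forall>z\<in>V. G z \<ge> 0) \<Longrightarrow> u \<in> V" and "(\<forall>z\<in>V. G z \<le> 0) \<Longrightarrow> u \<in> V"
proof -
  obtain x y where xy: "x \<in> V" "y \<in> V" "sgn_ord bb (G x) \<noteq> sgn_ord bb (G y)"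
    "u \<in> closed_segment x y" "G u = 0"
    using d unfolding DETV_def by blast
  obtain t where t: "0 \<le> t" "t \<le> 1" "u = (1 - t) *\<^sub>R x + t *\<^sub>R y"
    "G u = (1 - t) * G x + t * G y"
    using seg_aff[OF L xy(4), of k] G by auto
  show "(\<forall>z\<in>V. G z \<ge> 0) \<Longrightarrow> u \<in> V"
  proof -
    assume nn: "\<forall>z\<in>V. G z \<ge> 0"
    then have gx: "G x \<ge> 0" and gy: "G y \<ge> 0" using xy by auto
    show "u \<in> V"
    proof (cases "G x = 0")
      case True
      then have "G y > 0" using xy(3) gy by (auto simp: sgn_ord_def)
      then have "t = 0" using t True xy(5) by simp
      then show ?thesis using t xy by simp
    next
      case False
      then have "G y = 0" using xy(3) gx gy by (auto simp: sgn_ord_def)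
      then have "t = 1" using t False xy(5) by simp
      then show ?thesis using t xy by simp
    qed
  qed
  show "(\<forall>z\<in>V. G z \<le> 0) \<Longrightarrow> u \<in> V"
  proof -
    assume nn: "\<forall>z\<in>V. G z \<le> 0"
    then have gx: "G x \<le> 0" and gy: "G y \<le> 0" using xy by auto
    show "u \<in> V"
    proof (cases "G x = 0")
      case True
      then have "G y < 0" using xy(3) gy by (auto simp: sgn_ord_def)
      then have "t = 0" using t True xy(5) by simp
      then show ?thesis using t xy by simp
    next
      case False
      then have "G y = 0" using xy(3) gx gy by (auto simp: sgn_ord_def)
      then have "t = 1" using t False xy(5) by simp
      then show ?thesis using t xy by simp
    qed
  qed
qed




lemma seg_face:
  fixes a b c x y :: "'a::euclidean_space"
  assumes nc: "\<not> collinear {a,b,c}" and "x \<in> {a,b,c}" "y \<in> {a,b,c}"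
  shows "closed_segment x y face_of convex hull {a,b,c}"
proof -
  have "\<not> affine_dependent {a,b,c}" using nc collinear_3_eq_affine_dependent by blast
  then show ?thesis
    unfolding segment_convex_hull
    using face_of_convex_hull_affine_independent assms(2,3) by (metis empty_subsetI insert_subset)
qed

lemma p1_back:
  fixes a b c v w :: "'a::euclidean_space" and L :: "'a \<Rightarrow> real"
  assumes nc: "\<not> collinear {a,b,c}" and L: "linear L" and G: "\<And>p. G p = L p + k"
    and vw: "v \<noteq> w" "closed_segment v w \<subseteq> convex hull {a,b,c}"
    and ne: "\<not> (v \<in> {a,b,c} \<and> w \<in> {a,b,c})"
    and dv: "DETV {a,b,c} G bb v" and dw: "DETV {a,b,c} G bb w"
  shows "{p \<in> convex hull {a,b,c}. G p = 0} = closed_segment v w \<and>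
          (\<exists>Q1 Q2. Q1 \<noteq> Q2 \<and> components (convex hull {a,b,c} - closed_segment v w) = {Q1,Q2} \<and>
             (\<forall>p1\<in>Q1. \<forall>p2\<in>Q2. sgn_ord bb (G p1) \<noteq> sgn_ord bb (G p2)))"
proof -
  define D where "D = convex hull {a::'a,b,c}"
  have Gv: "G v = 0" and Gw: "G w = 0" using dv dw unfolding DETV_def by auto
  have neg: "\<exists>z\<in>{a,b,c}. G z < 0"
  proof (rule ccontr)
    assume "\<not> ?thesis"
    then have "\<forall>z\<in>{a,b,c}. G z \<ge> 0" by force
    then show False using det_vert(1)[OF L G dv] det_vert(1)[OF L G dw] ne by blast
  qed
  have pos: "\<exists>z\<in>{a,b,c}. G z > 0"
  proof (rule ccontr)
    assume "\<not> ?thesis"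
    then have "\<forall>z\<in>{a,b,c}. G z \<le> 0" by force
    then show False using det_vert(2)[OF L G dv] det_vert(2)[OF L G dw] ne by blast
  qed
  have vD: "v \<in> D" "w \<in> D" using vw(2) D_def by auto
  have indep: "\<not> affine_dependent {a,b,c}" using nc collinear_3_eq_affine_dependent by blast
  have noline: False if p: "p \<in> D" "G p = 0" "p \<notin> closed_segment v w" for p
  proof (cases "collinear {v,w,p}")
    case False
    then have ind2: "\<not> affine_dependent {v,w,p}" and dd: "v \<noteq> w" "v \<noteq> p" "w \<noteq> p"
      using collinear_3_eq_affine_dependent nc_distinct[OF False] by blast+
    have c3: "card {v,w,p} = 3" using dd by auto
    have c3': "card {a,b,c} = 3" using nc_distinct[OF nc] by auto
    have "aff_dim {v,w,p} = 2" using aff_dim_affine_independent[OF ind2] c3 by simp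
    moreover have "aff_dim D = 2"
      using aff_dim_affine_independent[OF indep] c3' unfolding D_def aff_dim_convex_hull by simp
    moreover have "{v,w,p} \<subseteq> D" using vD p by auto
    ultimately have ah: "affine hull {v,w,p} = affine hull D"
      using aff_dim_eq_full_gen by metis
    have z: "G z = 0" if "z \<in> {a,b,c}" for z
    proof -
      have "z \<in> affine hull D" using that D_def by (auto intro: hull_inc)
      then have "z \<in> affine hull {v,w,p}" using ah by simp
      then obtain u1 u2 u3 where u: "u1 + u2 + u3 = 1" "z = u1 *\<^sub>R v + u2 *\<^sub>R w + u3 *\<^sub>R p"
        unfolding affine_hull_3 by blast
      show ?thesis using aff3[OF L u(1), of v w p k] G u(2) Gv Gw p(2) by simp
    qed
    then show False using pos by force
  next
    case True
    then have "between (w,p) v \<or> between (p,v) w \<or> between (v,w) p"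
      using collinear_between_cases by blast
    then have "v \<in> closed_segment w p \<or> w \<in> closed_segment p v"
      using p(3) between_mem_segment by blast
    then show False
    proof
      assume vs: "v \<in> closed_segment w p"
      have "v \<noteq> p" using p(3) by auto
      then have vo: "v \<in> open_segment w p" using vs vw(1) open_segment_def by auto
      obtain x y where xy: "x \<in> {a,b,c}" "y \<in> {a,b,c}" "sgn_ord bb (G x) \<noteq> sgn_ord bb (G y)"
        "v \<in> closed_segment x y"
        using dv unfolding DETV_def by blast
      have F: "\<And>a' b' z. a' \<in> D \<Longrightarrow> b' \<in> D \<Longrightarrow> z \<in> closed_segment x y \<Longrightarrow> z \<in> open_segment a' b'
          \<Longrightarrow> a' \<in> closed_segment x y \<and> b' \<in> closed_segment x y"
        using seg_face[OF nc xy(1,2)] unfolding face_of_def D_def by blast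
      have "w \<in> closed_segment x y"
        using F[OF vD(2) p(1) xy(4) vo] by simp
      then have "G x = 0 \<and> G y = 0"
        using two_zeros[OF L xy(4), of w k] vw(1) Gv Gw G by simp
      then show False using xy(3) by simp
    next
      assume ws: "w \<in> closed_segment p v"
      have "w \<noteq> p" using p(3) by auto
      then have wo: "w \<in> open_segment p v" using ws vw(1) open_segment_def by auto
      obtain x y where xy: "x \<in> {a,b,c}" "y \<in> {a,b,c}" "sgn_ord bb (G x) \<noteq> sgn_ord bb (G y)"
        "w \<in> closed_segment x y"
        using dw unfolding DETV_def by blast
      have F: "\<And>a' b' z. a' \<in> D \<Longrightarrow> b' \<in> D \<Longrightarrow> z \<in> closed_segment x y \<Longrightarrow> z \<in> open_segment a' b'
          \<Longrightarrow> a' \<in> closed_segment x y \<and> b' \<in> closed_segment x y"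
        using seg_face[OF nc xy(1,2)] unfolding face_of_def D_def by blast
      have "v \<in> closed_segment x y"
        using F[OF p(1) vD(1) xy(4) wo] by simp
      then have "G x = 0 \<and> G y = 0"
        using two_zeros[OF L _ xy(4), of v k] vw(1) Gv Gw G by simp
      then show False using xy(3) by simp
    qed
  qed
  have Z: "{p \<in> D. G p = 0} = closed_segment v w"
  proof
    show "{p \<in> D. G p = 0} \<subseteq> closed_segment v w" using noline by blast
    show "closed_segment v w \<subseteq> {p \<in> D. G p = 0}"
    proof
      fix p assume p: "p \<in> closed_segment v w"
      have "L p + k = 0" using zero_on_seg[OF L p, of k] Gv Gw G by simp
      then show "p \<in> {p \<in> D. G p = 0}" using p vw(2) G D_def by auto
    qed
  qed
  obtain zp where zp: "zp \<in> D" "G zp > 0"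
    using pos unfolding D_def by (meson hull_inc)
  obtain zm where zm: "zm \<in> D" "G zm < 0"
    using neg unfolding D_def by (meson hull_inc)
  define P where "P = D \<inter> {p. 0 < G p}"
  define M where "M = D \<inter> {p. G p < 0}"
  have S: "D - closed_segment v w = P \<union> M" unfolding Z[symmetric] P_def M_def by auto
  have PM: "components (D - closed_segment v w) = {P, M}"
  proof (rule comps2[OF S])
    show "P \<inter> M = {}" unfolding P_def M_def by auto
    show "P \<noteq> {}" using zp unfolding P_def by blast
    show "M \<noteq> {}" using zm unfolding M_def by blast
    show "connected P" unfolding P_def D_def
      by (intro convex_connected convex_Int convex_convex_hull G_convex[OF L G])
    show "connected M" unfolding M_def D_def
      by (intro convex_connected convex_Int convex_convex_hull G_convex[OF L G])
    show "P = (D - closed_segment v w) \<inter> {p. 0 < G p}" unfolding S P_def M_def by auto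
    show "M = (D - closed_segment v w) \<inter> {p. G p < 0}" unfolding S P_def M_def by auto
    show "open {p. 0 < G p}" using G_open[OF L G] by simp
    show "open {p. G p < 0}" using G_open[OF L G] by simp
  qed
  have "zp \<in> P" "zp \<notin> M" using zp unfolding P_def M_def by auto
  then have PnM: "P \<noteq> M" by blast
  have sg: "\<forall>p1\<in>P. \<forall>p2\<in>M. sgn_ord bb (G p1) \<noteq> sgn_ord bb (G p2)"
    unfolding P_def M_def sgn_ord_def by auto
  have "\<exists>Q1 Q2. Q1 \<noteq> Q2 \<and> components (D - closed_segment v w) = {Q1,Q2} \<and>
             (\<forall>p1\<in>Q1. \<forall>p2\<in>Q2. sgn_ord bb (G p1) \<noteq> sgn_ord bb (G p2))"
    using PnM PM sg by blast
  then show ?thesis using Z unfolding D_def by blast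
qed




lemma real_both_zero:
  fixes gp gq mu nu :: real
  assumes "mu > 0" "nu > 0" "mu * gp + nu * gq = 0" "sgn_ord bb gp = sgn_ord bb gq"
  shows "gp = 0 \<and> gq = 0"
proof (cases "gp > 0")
  case True
  then have "gq \<ge> 0" using assms(4) unfolding sgn_ord_def by auto
  then have "mu * gp + nu * gq > 0" using True assms(1,2)
    by (simp add: add_pos_nonneg)
  then show ?thesis using assms(3) by simp
next
  case F1: False
  show ?thesis
  proof (cases "gp < 0")
    case True
    then have "\<not> sgn_ord bb gp" unfolding sgn_ord_def by auto
    then have "gq \<le> 0" using assms(4) unfolding sgn_ord_def by auto
    then have "mu * gp + nu * gq < 0" using True assms(1,2)
      by (simp add: add_neg_nonpos mult_pos_neg mult_nonneg_nonpos)
    then show ?thesis using assms(3) by simp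
  next
    case False
    then have "gp = 0" using F1 by simp
    then show ?thesis using assms(2,3) by simp
  qed
qed

lemma coef_nonneg:
  fixes x e x' :: real
  assumes "0 < x" "0 \<le> e" "e \<le> x / 2" "x' \<le> 1" "0 \<le> x'"
  shows "0 \<le> (1 + e) * x - e * x'"
proof -
  have "e * x' \<le> e" using assms by (simp add: mult_left_le)
  moreover have "e * x \<ge> 0" using assms by simp
  moreover have "(1 + e) * x = x + e * x" by (simp add: algebra_simps)
  ultimately show ?thesis using assms by linarith
qed

lemma p1_fwd:
  fixes a b c v w :: "'a::euclidean_space" and L :: "'a \<Rightarrow> real"
  assumes nc: "\<not> collinear {a,b,c}" and L: "linear L" and G: "\<And>p. G p = L p + k"
    and vw: "v \<noteq> w" "closed_segment v w \<subseteq> convex hull {a,b,c}"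
    and Z: "{p \<in> convex hull {a,b,c}. G p = 0} = closed_segment v w"
    and C: "components (convex hull {a,b,c} - closed_segment v w) = {Q1,Q2}" "Q1 \<noteq> Q2"
  shows "DETV {a,b,c} G bb v"
proof -
  define D where "D = convex hull {a::'a,b,c}"
  have vD: "v \<in> D" "w \<in> D" using vw(2) D_def by auto
  have Gv: "G v = 0" using Z by auto
  have abcD: "a \<in> D" "b \<in> D" "c \<in> D" unfolding D_def by (simp_all add: hull_inc)
  have C1: "components (D - closed_segment v w) = {Q1,Q2}" using C(1) unfolding D_def .
  have onecomp: False if S: "D - closed_segment v w = D \<inter> U" and cU: "convex U" for U
  proof -
    have cn: "connected (D \<inter> U)" unfolding D_def by (intro convex_connected convex_Int convex_convex_hull cU)
    have C2: "components (D \<inter> U) = {Q1,Q2}" using C1 unfolding S .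
    show False
    proof (cases "D \<inter> U = {}")
      case True
      then have "components (D \<inter> U) = {}" by simp
      then show ?thesis using C2 by simp
    next
      case False
      then have "components (D \<inter> U) = {D \<inter> U}"
        by (simp add: components_eq_sing_iff cn)
      then have "{Q1, Q2} = {D \<inter> U}" using C2 by simp
      then have "Q1 = D \<inter> U" "Q2 = D \<inter> U" by blast+
      then show ?thesis using C(2) by simp
    qed
  qed
  have neg: "\<exists>z\<in>{a,b,c}. G z < 0"
  proof (rule ccontr)
    assume "\<not> ?thesis"
    then have nn: "G a \<ge> 0" "G b \<ge> 0" "G c \<ge> 0" by force+
    have "D - closed_segment v w = D \<inter> {p. 0 < G p}"
    proof
      show "D - closed_segment v w \<subseteq> D \<inter> {p. 0 < G p}"
      proof
        fix p assume p: "p \<in> D - closed_segment v w"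
        then have "G p \<noteq> 0" using Z D_def by auto
        moreover have "G p \<ge> 0" using hull_sign(1)[OF L G, of p a b c] p nn D_def by auto
        ultimately show "p \<in> D \<inter> {p. 0 < G p}" using p by auto
      qed
      show "D \<inter> {p. 0 < G p} \<subseteq> D - closed_segment v w"
        unfolding Z[folded D_def, symmetric] by auto
    qed
    then show False using onecomp G_convex(1)[OF L G] by blast
  qed
  have pos: "\<exists>z\<in>{a,b,c}. G z > 0"
  proof (rule ccontr)
    assume "\<not> ?thesis"
    then have nn: "G a \<le> 0" "G b \<le> 0" "G c \<le> 0" by force+
    have "D - closed_segment v w = D \<inter> {p. G p < 0}"
    proof
      show "D - closed_segment v w \<subseteq> D \<inter> {p. G p < 0}"
      proof
        fix p assume p: "p \<in> D - closed_segment v w"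
        then have "G p \<noteq> 0" using Z D_def by auto
        moreover have "G p \<le> 0" using hull_sign(2)[OF L G, of p a b c] p nn D_def by auto
        ultimately show "p \<in> D \<inter> {p. G p < 0}" using p by auto
      qed
      show "D \<inter> {p. G p < 0} \<subseteq> D - closed_segment v w"
        unfolding Z[folded D_def, symmetric] by auto
    qed
    then show False using onecomp G_convex(2)[OF L G] by blast
  qed
  obtain xp where xp: "xp \<in> {a,b,c}" "G xp > 0" using pos by blast
  obtain xn where xn: "xn \<in> {a,b,c}" "G xn < 0" using neg by blast
  have sxp: "sgn_ord bb (G xp)" and sxn: "\<not> sgn_ord bb (G xn)"
    using xp xn unfolding sgn_ord_def by auto
  have vert: "DETV {a,b,c} G bb v" if "v = p" "p \<in> {a,b,c}" for p
  proof (cases "sgn_ord bb (G p)")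
    case True
    then have "p \<noteq> xn" using sxn by auto
    then show ?thesis unfolding DETV_def using that True sxn xn Gv
      by (intro exI[of _ p] exI[of _ xn]) auto
  next
    case False
    then have "p \<noteq> xp" using sxp by auto
    then show ?thesis unfolding DETV_def using that False sxp xp Gv
      by (intro exI[of _ p] exI[of _ xp]) auto
  qed
  have edge: "DETV {a,b,c} G bb v"
    if pq: "p \<in> {a,b,c}" "q \<in> {a,b,c}" "p \<noteq> q" and mn: "0 \<le> nu" "nu \<le> 1"
      and ve: "v = (1 - nu) *\<^sub>R p + nu *\<^sub>R q" for p q nu
  proof -
    have vs: "v \<in> closed_segment p q" unfolding closed_segment_def using mn ve by blast
    show ?thesis
    proof (cases "sgn_ord bb (G p) = sgn_ord bb (G q)")
      case False
      then show ?thesis unfolding DETV_def using pq vs Gv by blast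
    next
      case same: True
      show ?thesis
      proof (cases "nu = 0")
        case True
        then show ?thesis using vert[of p] ve pq by simp
      next
        case nz: False
        show ?thesis
        proof (cases "nu = 1")
          case True
          then show ?thesis using vert[of q] ve pq by simp
        next
          case False
          have "G v = (1 - nu) * G p + nu * G q" using aff2[OF L, of nu p q k] ve G by simp
          then have "G p = 0 \<and> G q = 0"
            using real_both_zero[of "1 - nu" nu "G p" "G q" bb] same Gv mn nz False by simp
          then have pqs: "p \<in> closed_segment v w" "q \<in> closed_segment v w"
            using Z pq D_def abcD by auto
          have "v \<noteq> p"
          proof
            assume "v = p"
            then have "nu *\<^sub>R (q - p) = 0" using ve by (simp add: algebra_simps)
            then show False using nz pq(3) by simp
          qed
          moreover have "v \<noteq> q"
          proof
            assume "v = q"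
            then have "(1 - nu) *\<^sub>R (p - q) = 0" using ve by (simp add: algebra_simps)
            then show False using False pq(3) by simp
          qed
          ultimately have "v \<in> open_segment p q" using vs open_segment_def by auto
          moreover have "v extreme_point_of closed_segment v w" by (simp add: extreme_point_of_segment)
          ultimately show ?thesis using pqs unfolding extreme_point_of_def by blast
        qed
      qed
    qed
  qed
  obtain al be ga where bc: "0 \<le> al" "0 \<le> be" "0 \<le> ga" "al + be + ga = 1"
    "v = al *\<^sub>R a + be *\<^sub>R b + ga *\<^sub>R c"
    using vD(1) unfolding D_def convex_hull_3 by blast
  have d: "a \<noteq> b" "a \<noteq> c" "b \<noteq> c" using nc_distinct[OF nc] by auto
  show ?thesis
  proof (cases "al = 0")
    case True
    then have "be = 1 - ga" using bc by simp
    then have "v = (1 - ga) *\<^sub>R b + ga *\<^sub>R c" using bc True by simp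
    then show ?thesis using edge[of b c ga] bc d True by simp
  next
    case al: False
    show ?thesis
    proof (cases "be = 0")
      case True
      then have "al = 1 - ga" using bc by simp
      then have "v = (1 - ga) *\<^sub>R a + ga *\<^sub>R c" using bc True by simp
      then show ?thesis using edge[of a c ga] bc d True by simp
    next
      case be: False
      show ?thesis
      proof (cases "ga = 0")
        case True
        then have "al = 1 - be" using bc by simp
        then have "v = (1 - be) *\<^sub>R a + be *\<^sub>R b" using bc True by simp
        then show ?thesis using edge[of a b be] bc d True by simp
      next
        case ga: False
        obtain al' be' ga' where bw: "0 \<le> al'" "0 \<le> be'" "0 \<le> ga'" "al' + be' + ga' = 1"
          "w = al' *\<^sub>R a + be' *\<^sub>R b + ga' *\<^sub>R c"
          using vD(2) unfolding D_def convex_hull_3 by blast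
        define e where "e = min al (min be ga) / 2"
        have pa: "al > 0" "be > 0" "ga > 0" using al be ga bc by auto
        then have e0: "e > 0" "e \<le> al / 2" "e \<le> be / 2" "e \<le> ga / 2" unfolding e_def by auto
        have le1: "al' \<le> 1" "be' \<le> 1" "ga' \<le> 1" using bw by linarith+
        define v' where "v' = (1 + e) *\<^sub>R v - e *\<^sub>R w"
        have v'e: "v' = ((1 + e) * al - e * al') *\<^sub>R a + ((1 + e) * be - e * be') *\<^sub>R b
                      + ((1 + e) * ga - e * ga') *\<^sub>R c"
          unfolding v'_def bc(5) bw(5) by (simp add: algebra_simps)
        have nnc: "0 \<le> (1 + e) * al - e * al'" "0 \<le> (1 + e) * be - e * be'"
            "0 \<le> (1 + e) * ga - e * ga'"
          using coef_nonneg[OF pa(1) _ e0(2) le1(1) bw(1)] coef_nonneg[OF pa(2) _ e0(3) le1(2) bw(2)]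
            coef_nonneg[OF pa(3) _ e0(4) le1(3) bw(3)] e0(1) by auto
        have "((1 + e) * al - e * al') + ((1 + e) * be - e * be') + ((1 + e) * ga - e * ga')
           = (1 + e) * (al + be + ga) - e * (al' + be' + ga')" by (simp add: algebra_simps)
        also have "\<dots> = 1" using bc(4) bw(4) by simp
        finally have "((1 + e) * al - e * al') + ((1 + e) * be - e * be') + ((1 + e) * ga - e * ga') = 1" .
        then have "v' \<in> D" unfolding D_def convex_hull_3 v'e using nnc by blast
        moreover have "G v' = 0"
        proof -
          have "L v' = (1 + e) * L v - e * L w"
            unfolding v'_def by (simp add: linear_diff[OF L] linear_scale[OF L])
          moreover have "G w = 0" using Z by auto
          moreover have "L v = - k" "L w = - k" using G Gv \<open>G w = 0\<close> by (simp_all add: eq_neg_iff_add_eq_0)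
          ultimately have "L v' = - k" by (simp add: algebra_simps)
          then show ?thesis using G by simp
        qed
        ultimately have "v' \<in> closed_segment v w" using Z D_def by auto
        then obtain t where t: "0 \<le> t" "t \<le> 1" "v' = (1 - t) *\<^sub>R v + t *\<^sub>R w"
          unfolding closed_segment_def by blast
        then have "(e + t) *\<^sub>R (v - w) = 0" unfolding v'_def by (simp add: algebra_simps)
        then show ?thesis using e0 t vw(1) by simp
      qed
    qed
  qed
qed




lemma third_vertex:
  assumes "v \<in> {a,b,c}" "w \<in> {a,b,c}" "v \<noteq> w"
  shows "\<exists>c'. {a,b,c} = {v,w,c'}"
  using assms by (auto simp: insert_commute)

lemma tri_affine:
  assumes F: "pl_fibered_filtration sig N T f" and D: "\<Delta> \<in> T"
    and ij: "i \<in> {1..N}" "j \<in> {1..N}"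
  shows "\<exists>L k. linear L \<and> (\<forall>p\<in>\<Delta>. f (sig i) p - f (sig j) p = L p + k)"
proof -
  obtain Li ci where i: "linear Li" "\<forall>p\<in>\<Delta>. f (sig i) p = Li p + ci"
    using F D ij unfolding pl_fibered_filtration_def by blast
  obtain Lj cj where j: "linear Lj" "\<forall>p\<in>\<Delta>. f (sig j) p = Lj p + cj"
    using F D ij unfolding pl_fibered_filtration_def by blast
  have "linear (\<lambda>p. Li p - Lj p)" using i(1) j(1) by (rule linear_compose_sub)
  moreover have "\<forall>p\<in>\<Delta>. f (sig i) p - f (sig j) p = (Li p - Lj p) + (ci - cj)"
    using i(2) j(2) by simp
  ultimately show ?thesis by blast
qed




theorem lemmaA3:
  fixes sig :: "nat \<Rightarrow> 'v set" and N :: nat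
    and T :: "'a::euclidean_space set set"
    and f :: "'v set \<Rightarrow> 'a \<Rightarrow> real"
    and v w :: 'a and i j :: nat
  assumes K: "indexed_simplicial_complex sig N"
    and B: "triangulated_surface T"
    and F: "pl_fibered_filtration sig N T f"
    and seg: "v \<noteq> w" "closed_segment v w \<subseteq> \<Union> T"
      "\<not> closed_segment v w \<subseteq> surface_boundary T"
    and ij: "i \<in> {1..N}" "j \<in> {1..N}" "i \<noteq> j"
  shows "(\<forall>\<Delta>. closed_segment v w \<notin> B_edges T \<and> \<Delta> \<in> T \<and> closed_segment v w \<subseteq> \<Delta> \<and>
              (\<forall>\<Delta>'\<in>T. closed_segment v w \<subseteq> \<Delta>' \<longrightarrow> \<Delta>' = \<Delta>) \<longrightarrow>
            (swaps_in_triangle sig N f i j \<Delta> (closed_segment v w) \<longleftrightarrow>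
             segment_detected_in sig N f i j \<Delta> v w))
       \<and> (\<forall>\<Delta>1 \<Delta>2. closed_segment v w \<in> B_edges T \<and> \<Delta>1 \<in> T \<and> \<Delta>2 \<in> T \<and> \<Delta>1 \<noteq> \<Delta>2 \<and>
              closed_segment v w \<in> tri_edges \<Delta>1 \<and> closed_segment v w \<in> tri_edges \<Delta>2 \<longrightarrow>
            (swaps_along_edge sig N f i j (closed_segment v w) \<Delta>1 \<Delta>2 \<longleftrightarrow>
             (segment_detected_in sig N f i j \<Delta>1 v w \<noteq> segment_detected_in sig N f i j \<Delta>2 v w)))"
proof -
  define g where "g = (\<lambda>p. f (sig i) p - f (sig j) p)"
  define bb where "bb = (j < i)"
  have dord: "diff_order sig N f i j p q \<longleftrightarrow> sgn_ord bb (g p) \<noteq> sgn_ord bb (g q)" for p q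
    unfolding diff_order_iff[OF ij] g_def bb_def sgn_ord_def by auto
  have det: "detected_along sig N f i j x y u \<longleftrightarrow>
      (sgn_ord bb (g x) \<noteq> sgn_ord bb (g y) \<and> u \<in> closed_segment x y \<and> g u = 0)" for x y u
    unfolding detected_along_def dord by (auto simp: g_def)
  have segdet: "segment_detected_in sig N f i j \<Delta> v w \<longleftrightarrow>
      DETV (tri_verts \<Delta>) g bb v \<and> DETV (tri_verts \<Delta>) g bb w" for \<Delta>
    unfolding segment_detected_in_def DETV_def det by blast
  have triT: "\<exists>a b c. \<not> collinear {a,b,c} \<and> \<Delta> = convex hull {a,b,c}" if "\<Delta> \<in> T" for \<Delta>
  proof -
    have "\<forall>\<Delta>\<in>T. is_triangle \<Delta>" using B unfolding triangulated_surface_def by simp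
    then show ?thesis using that unfolding is_triangle_def by blast
  qed
  have affT: "\<exists>L k. linear L \<and> (\<forall>p\<in>\<Delta>. g p = L p + k)" if "\<Delta> \<in> T" for \<Delta>
    using tri_affine[OF F that ij(1,2)] unfolding g_def by blast
  show ?thesis
  proof (intro conjI allI impI)
    fix \<Delta>
    assume H: "closed_segment v w \<notin> B_edges T \<and> \<Delta> \<in> T \<and> closed_segment v w \<subseteq> \<Delta> \<and>
              (\<forall>\<Delta>'\<in>T. closed_segment v w \<subseteq> \<Delta>' \<longrightarrow> \<Delta>' = \<Delta>)"
    have HD: "\<Delta> \<in> T" and Hn: "closed_segment v w \<notin> B_edges T" and Hs: "closed_segment v w \<subseteq> \<Delta>"
      using H by simp_all
    obtain a b c where nc: "\<not> collinear {a,b,c}" and De: "\<Delta> = convex hull {a,b,c}"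
      using triT[OF HD] by blast
    obtain L k where L: "linear L" and gL: "\<forall>p\<in>\<Delta>. g p = L p + k" using affT[OF HD] by blast
    define G where "G = (\<lambda>p. L p + k)"
    have GG: "\<And>p. G p = L p + k" unfolding G_def by simp
    have gG: "g p = G p" if "p \<in> \<Delta>" for p using gL that G_def by simp
    have tv: "tri_verts \<Delta> = {a,b,c}" using tri_verts_eq[OF nc] De by simp
    have ne: "\<not> (v \<in> {a,b,c} \<and> w \<in> {a,b,c})"
    proof
      assume "v \<in> {a,b,c} \<and> w \<in> {a,b,c}"
      then have "closed_segment v w \<in> tri_edges \<Delta>" unfolding tri_edges_def tv using seg(1) by blast
      then have "closed_segment v w \<in> B_edges T" unfolding B_edges_def using HD by blast
      then show False using Hn by blast
    qed
    have vD: "{a,b,c} \<subseteq> \<Delta>" unfolding De by (simp add: hull_subset)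
    have cvx: "convex \<Delta>" unfolding De by simp
    have DG: "DETV {a,b,c} g bb u \<longleftrightarrow> DETV {a,b,c} G bb u" for u
    proof -
      have "x \<in> {a,b,c} \<Longrightarrow> y \<in> {a,b,c} \<Longrightarrow> u \<in> closed_segment x y \<Longrightarrow>
          g x = G x \<and> g y = G y \<and> g u = G u" for x y
        using gG vD closed_segment_subset[OF _ _ cvx, of x y] by blast
      then show ?thesis unfolding DETV_def by metis
    qed
    have eqs: "eq_set sig f i j \<inter> \<Delta> = {p \<in> \<Delta>. G p = 0}"
    proof -
      have "p \<in> \<Delta> \<Longrightarrow> (f (sig i) p = f (sig j) p) \<longleftrightarrow> G p = 0" for p
        using gG[of p] unfolding g_def by auto
      then show ?thesis unfolding eq_set_def by auto
    qed
    have sw: "swaps_in_triangle sig N f i j \<Delta> (closed_segment v w) \<longleftrightarrow>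
      ({p \<in> \<Delta>. G p = 0} = closed_segment v w \<and>
          (\<exists>Q1 Q2. Q1 \<noteq> Q2 \<and> components (\<Delta> - closed_segment v w) = {Q1,Q2} \<and>
             (\<forall>p1\<in>Q1. \<forall>p2\<in>Q2. sgn_ord bb (G p1) \<noteq> sgn_ord bb (G p2))))"
    proof -
      have "(\<forall>p1\<in>Q1. \<forall>p2\<in>Q2. diff_order sig N f i j p1 p2) \<longleftrightarrow>
            (\<forall>p1\<in>Q1. \<forall>p2\<in>Q2. sgn_ord bb (G p1) \<noteq> sgn_ord bb (G p2))"
        if "components (\<Delta> - closed_segment v w) = {Q1,Q2}" for Q1 Q2
      proof -
        have "Q1 \<in> components (\<Delta> - closed_segment v w)" "Q2 \<in> components (\<Delta> - closed_segment v w)"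
          using that by simp_all
        then have "Q1 \<subseteq> \<Delta> - closed_segment v w" "Q2 \<subseteq> \<Delta> - closed_segment v w"
          by (simp_all add: in_components_subset)
        then have "Q1 \<subseteq> \<Delta>" "Q2 \<subseteq> \<Delta>" by auto
        then have e1: "\<And>p. p \<in> Q1 \<Longrightarrow> g p = G p" "\<And>p. p \<in> Q2 \<Longrightarrow> g p = G p"
          using gG by blast+
        show ?thesis unfolding dord using e1 by simp
      qed
      note QQ = this
      have "(\<exists>Q1 Q2. Q1 \<noteq> Q2 \<and> components (\<Delta> - closed_segment v w) = {Q1,Q2} \<and>
             (\<forall>p1\<in>Q1. \<forall>p2\<in>Q2. diff_order sig N f i j p1 p2)) \<longleftrightarrow>
            (\<exists>Q1 Q2. Q1 \<noteq> Q2 \<and> components (\<Delta> - closed_segment v w) = {Q1,Q2} \<and>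
             (\<forall>p1\<in>Q1. \<forall>p2\<in>Q2. sgn_ord bb (G p1) \<noteq> sgn_ord bb (G p2)))"
      proof
        assume "\<exists>Q1 Q2. Q1 \<noteq> Q2 \<and> components (\<Delta> - closed_segment v w) = {Q1,Q2} \<and>
             (\<forall>p1\<in>Q1. \<forall>p2\<in>Q2. diff_order sig N f i j p1 p2)"
        then obtain Q1 Q2 where q: "Q1 \<noteq> Q2" "components (\<Delta> - closed_segment v w) = {Q1,Q2}"
          "\<forall>p1\<in>Q1. \<forall>p2\<in>Q2. diff_order sig N f i j p1 p2" by meson
        have "\<forall>p1\<in>Q1. \<forall>p2\<in>Q2. sgn_ord bb (G p1) \<noteq> sgn_ord bb (G p2)"
          using q(3) QQ[OF q(2)] by simp
        then show "\<exists>Q1 Q2. Q1 \<noteq> Q2 \<and> components (\<Delta> - closed_segment v w) = {Q1,Q2} \<and>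
             (\<forall>p1\<in>Q1. \<forall>p2\<in>Q2. sgn_ord bb (G p1) \<noteq> sgn_ord bb (G p2))" using q(1,2) by meson
      next
        assume "\<exists>Q1 Q2. Q1 \<noteq> Q2 \<and> components (\<Delta> - closed_segment v w) = {Q1,Q2} \<and>
             (\<forall>p1\<in>Q1. \<forall>p2\<in>Q2. sgn_ord bb (G p1) \<noteq> sgn_ord bb (G p2))"
        then obtain Q1 Q2 where q: "Q1 \<noteq> Q2" "components (\<Delta> - closed_segment v w) = {Q1,Q2}"
          "\<forall>p1\<in>Q1. \<forall>p2\<in>Q2. sgn_ord bb (G p1) \<noteq> sgn_ord bb (G p2)" by meson
        have "\<forall>p1\<in>Q1. \<forall>p2\<in>Q2. diff_order sig N f i j p1 p2"
          using q(3) QQ[OF q(2)] by simp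
        then show "\<exists>Q1 Q2. Q1 \<noteq> Q2 \<and> components (\<Delta> - closed_segment v w) = {Q1,Q2} \<and>
             (\<forall>p1\<in>Q1. \<forall>p2\<in>Q2. diff_order sig N f i j p1 p2)" using q(1,2) by meson
      qed
      then show ?thesis unfolding swaps_in_triangle_def eqs by simp
    qed
    have sd: "segment_detected_in sig N f i j \<Delta> v w \<longleftrightarrow>
        DETV {a,b,c} G bb v \<and> DETV {a,b,c} G bb w"
      unfolding segdet tv DG ..
    show "swaps_in_triangle sig N f i j \<Delta> (closed_segment v w) \<longleftrightarrow>
             segment_detected_in sig N f i j \<Delta> v w"
      unfolding sw sd
    proof
      assume A: "{p \<in> \<Delta>. G p = 0} = closed_segment v w \<and>
          (\<exists>Q1 Q2. Q1 \<noteq> Q2 \<and> components (\<Delta> - closed_segment v w) = {Q1,Q2} \<and>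
             (\<forall>p1\<in>Q1. \<forall>p2\<in>Q2. sgn_ord bb (G p1) \<noteq> sgn_ord bb (G p2)))"
      then obtain Q1 Q2 where Q: "Q1 \<noteq> Q2" "components (\<Delta> - closed_segment v w) = {Q1,Q2}" by meson
      have Z: "{p \<in> convex hull {a,b,c}. G p = 0} = closed_segment v w" using A De by simp
      have s2: "closed_segment v w \<subseteq> convex hull {a,b,c}" using Hs De by simp
      have C: "components (convex hull {a,b,c} - closed_segment v w) = {Q1,Q2}" using Q De by simp
      have "DETV {a,b,c} G bb v" using p1_fwd[OF nc L GG seg(1) s2 Z C Q(1)] .
      moreover have "DETV {a,b,c} G bb w"
        using p1_fwd[OF nc L GG seg(1)[symmetric], of Q1 Q2] s2 Z C Q(1)
        by (simp add: closed_segment_commute)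
      ultimately show "DETV {a,b,c} G bb v \<and> DETV {a,b,c} G bb w" ..
    next
      assume A: "DETV {a,b,c} G bb v \<and> DETV {a,b,c} G bb w"
      have s2: "closed_segment v w \<subseteq> convex hull {a,b,c}" using Hs De by simp
      show "{p \<in> \<Delta>. G p = 0} = closed_segment v w \<and>
          (\<exists>Q1 Q2. Q1 \<noteq> Q2 \<and> components (\<Delta> - closed_segment v w) = {Q1,Q2} \<and>
             (\<forall>p1\<in>Q1. \<forall>p2\<in>Q2. sgn_ord bb (G p1) \<noteq> sgn_ord bb (G p2)))"
        using p1_back[OF nc L GG seg(1) s2 ne, of bb] A De by simp
    qed
  next
    fix \<Delta>1 \<Delta>2
    assume H: "closed_segment v w \<in> B_edges T \<and> \<Delta>1 \<in> T \<and> \<Delta>2 \<in> T \<and> \<Delta>1 \<noteq> \<Delta>2 \<and>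
              closed_segment v w \<in> tri_edges \<Delta>1 \<and> closed_segment v w \<in> tri_edges \<Delta>2"
    have H1: "\<Delta>1 \<in> T" "closed_segment v w \<in> tri_edges \<Delta>1" and H2: "\<Delta>2 \<in> T" "closed_segment v w \<in> tri_edges \<Delta>2"
      using H by simp_all
    have tri: "\<exists>c L k. \<not> collinear {v,w,c} \<and> \<Delta> = convex hull {v,w,c} \<and> tri_verts \<Delta> = {v,w,c}
        \<and> linear L \<and> (\<forall>p\<in>\<Delta>. g p = L p + k)"
      if tD: "\<Delta> \<in> T" and te: "closed_segment v w \<in> tri_edges \<Delta>" for \<Delta>
    proof -
      obtain a b c where nc: "\<not> collinear {a,b,c}" and De: "\<Delta> = convex hull {a,b,c}"
        using triT[OF tD] by blast
      obtain L k where L: "linear L" and gL: "\<forall>p\<in>\<Delta>. g p = L p + k" using affT[OF tD] by blast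
      have tv: "tri_verts \<Delta> = {a,b,c}" using tri_verts_eq[OF nc] De by simp
      obtain x y where xy: "x \<in> {a,b,c}" "y \<in> {a,b,c}" "closed_segment v w = closed_segment x y"
        using te unfolding tri_edges_def tv by blast
      then have "{v,w} = {x,y}" by simp
      then have "v \<in> {a,b,c}" "w \<in> {a,b,c}" using xy by auto
      then obtain c' where c': "{a,b,c} = {v,w,c'}" using third_vertex seg(1) by metis
      show ?thesis using nc De tv L gL c' by (intro exI[of _ c'] exI[of _ L] exI[of _ k]) simp
    qed
    obtain c1 L1 k1 where T1: "\<not> collinear {v,w,c1}" "\<Delta>1 = convex hull {v,w,c1}" "tri_verts \<Delta>1 = {v,w,c1}"
      "linear L1" "\<forall>p\<in>\<Delta>1. g p = L1 p + k1"
      using tri[OF H1] by blast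
    obtain c2 L2 k2 where T2: "\<not> collinear {v,w,c2}" "\<Delta>2 = convex hull {v,w,c2}" "tri_verts \<Delta>2 = {v,w,c2}"
      "linear L2" "\<forall>p\<in>\<Delta>2. g p = L2 p + k2"
      using tri[OF H2] by blast
    have g1: "\<forall>p\<in>convex hull {v,w,c1}. g p = L1 p + k1" using T1 by simp
    have g2: "\<forall>p\<in>convex hull {v,w,c2}. g p = L2 p + k2" using T2 by simp
    have D1: "segment_detected_in sig N f i j \<Delta>1 v w \<longleftrightarrow> (g v = 0 \<and> g w = 0 \<and> sgn_ord bb (g c1) \<noteq> bb)"
      unfolding segdet T1(3) DETV_def using tri_detect[OF T1(1) T1(4) g1] by simp
    have D2: "segment_detected_in sig N f i j \<Delta>2 v w \<longleftrightarrow> (g v = 0 \<and> g w = 0 \<and> sgn_ord bb (g c2) \<noteq> bb)"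
      unfolding segdet T2(3) DETV_def using tri_detect[OF T2(1) T2(4) g2] by simp
    have sw: "swaps_along_edge sig N f i j (closed_segment v w) \<Delta>1 \<Delta>2 \<longleftrightarrow>
       closed_segment v w \<subseteq> eq_set sig f i j \<and>
       (\<forall>p1\<in>\<Delta>1 - closed_segment v w. \<forall>p2\<in>\<Delta>2 - closed_segment v w. sgn_ord bb (g p1) \<noteq> sgn_ord bb (g p2))"
      unfolding swaps_along_edge_def dord ..
    have eqs: "p \<in> eq_set sig f i j \<longleftrightarrow> g p = 0" for p unfolding eq_set_def g_def by simp
    have hv1: "v \<in> \<Delta>1" "w \<in> \<Delta>1" "c1 \<in> \<Delta>1" unfolding T1(2) by (simp_all add: hull_inc)
    have hv2: "c2 \<in> \<Delta>2" unfolding T2(2) by (simp_all add: hull_inc)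
    show "swaps_along_edge sig N f i j (closed_segment v w) \<Delta>1 \<Delta>2 \<longleftrightarrow>
          (segment_detected_in sig N f i j \<Delta>1 v w \<noteq> segment_detected_in sig N f i j \<Delta>2 v w)"
    proof (cases "g v = 0 \<and> g w = 0")
      case True
      have sub: "closed_segment v w \<subseteq> eq_set sig f i j"
      proof
        fix p assume p: "p \<in> closed_segment v w"
        have "L1 v + k1 = 0" "L1 w + k1 = 0" using True T1(5) hv1 by auto
        then have "L1 p + k1 = 0" using zero_on_seg[OF T1(4) p] by blast
        moreover have "p \<in> \<Delta>1" using p hv1 closed_segment_subset[of v \<Delta>1 w] T1(2) by auto
        ultimately show "p \<in> eq_set sig f i j" using eqs T1(5) by simp
      qed
      have s1: "sgn_ord bb (g p) = sgn_ord bb (g c1)" if "p \<in> \<Delta>1 - closed_segment v w" for p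
        using side_sign[OF T1(1) T1(4) g1] True that T1(2) by blast
      have s2: "sgn_ord bb (g p) = sgn_ord bb (g c2)" if "p \<in> \<Delta>2 - closed_segment v w" for p
        using side_sign[OF T2(1) T2(4) g2] True that T2(2) by blast
      have c1n: "c1 \<in> \<Delta>1 - closed_segment v w" using hv1 not_in_seg[OF T1(1)] by simp
      have c2n: "c2 \<in> \<Delta>2 - closed_segment v w" using hv2 not_in_seg[OF T2(1)] by simp
      have "swaps_along_edge sig N f i j (closed_segment v w) \<Delta>1 \<Delta>2 \<longleftrightarrow>
            sgn_ord bb (g c1) \<noteq> sgn_ord bb (g c2)"
        unfolding sw using sub s1 s2 c1n c2n by metis
      then show ?thesis unfolding D1 D2 using True by blast
    next
      case False
      have "\<not> closed_segment v w \<subseteq> eq_set sig f i j" using False eqs by auto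
      then show ?thesis unfolding sw D1 D2 using False by blast
    qed
  qed
qed


end
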